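(* Let $a$ and $b$ be relatively prime integers with $0<a<b$, and let $n=a+b$. Let $\pi$ be the permutation of $\{1,\ldots,n\}$ defined as follows: if $a=1$, $\pi=(2,3,\ldots,b+1,1)$; if $a\ge 2$, $\pi_i$ is the unique element of $\{1,\ldots,n\}$ with $\pi_i\equiv 1+(i-1)a \pmod{a+b}$, for $i=1,\ldots,n$. Let $a'\in\{1,\ldots,a+b-1\}$ be the inverse of $a$ modulo $a+b$, and let $b'=a+b-a'$. Then $(a',-b')$ is a $D$-pair corresponding to the permutation $\pi^{-1}$, i.e. the set of values $\{\pi^{-1}_{j+1}-\pi^{-1}_j : 1\le j\le n-1\}$ equals $\{a',-b'\}$.
   Context: A pair $(p,q)$ of distinct integers is a $D$-pair corresponding to a permutation $\sigma$ of $\{1,\ldots,n\}$ if the set of discrete derivative values $\{\sigma_{i+1}-\sigma_i : 1\le i\le n-1\}$ equals $\{p,q\}$. Here $\pi^{-1}$ denotes the inverse permutation, written as the sequence $(\pi^{-1}_1,\ldots,\pi^{-1}_n)$. *)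

theory Defs
  imports "HOL-Number_Theory.Cong"
begin

definition D_pair :: "int \<Rightarrow> int \<Rightarrow> (int \<Rightarrow> int) \<Rightarrow> int \<Rightarrow> bool" where
  "D_pair p q \<sigma> n \<longleftrightarrow> p \<noteq> q \<and> {\<sigma> (i + 1) - \<sigma> i | i. 1 \<le> i \<and> i \<le> n - 1} = {p, q}"

definition pi_perm :: "int \<Rightarrow> int \<Rightarrow> int \<Rightarrow> int" where
  "pi_perm a b i =
     (if a = 1 then (if i \<le> b then i + 1 else 1)
      else (THE x. x \<in> {1..a+b} \<and> [x = 1 + (i - 1) * a] (mod (a + b))))"

definition inv_mod :: "int \<Rightarrow> int \<Rightarrow> int" where
  "inv_mod a n = (THE a'. a' \<in> {1..n-1} \<and> [a * a' = 1] (mod n))"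

end

theory Submission
  imports Defs
begin

lemma uniq_mod:
  fixes x y n :: int
  assumes "1 \<le> x" "x \<le> n" "1 \<le> y" "y \<le> n" "x mod n = y mod n"
  shows "x = y"
proof -
  have "n dvd (x - y)" using assms(5) by (simp add: mod_eq_dvd_iff)
  then obtain k where k: "x - y = n * k" by (auto elim: dvdE)
  have "k = 0"
  proof (rule ccontr)
    assume "k \<noteq> 0"
    hence "k \<ge> 1 \<or> k \<le> -1" by auto
    thus False
    proof
      assume "k \<ge> 1" hence "n * k \<ge> n" using assms by (simp add: mult_le_cancel_left1)
      thus False using k assms by linarith
    next
      assume "k \<le> -1" hence "n * k \<le> -n" using assms
        by (metis mult.commute mult_minus1 mult_right_mono order_trans assms zero_le_one le_add_diff_inverse2 linorder_not_le order.strict_trans1 mult_le_cancel_left1 minus_mult_commute mult_minus1_right)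
      thus False using k assms by linarith
    qed
  qed
  thus ?thesis using k by simp
qed

lemma step_mod:
  fixes x d n :: int
  assumes "0 < d" "d < n"
  shows "(x + d) mod n - x mod n = (if x mod n + d < n then d else d - n)"
proof -
  have r: "0 \<le> x mod n" "x mod n < n" using assms by auto
  have "(x + d) mod n = (x mod n + d) mod n" by (simp add: mod_add_left_eq)
  also have "\<dots> = (if x mod n + d < n then x mod n + d else x mod n + d - n)"
  proof (cases "x mod n + d < n")
    case True thus ?thesis using r assms by simp
  next
    case False
    hence "(x mod n + d) mod n = (x mod n + d - n) mod n" by (simp add: mod_diff_right_eq[symmetric])
    also have "\<dots> = x mod n + d - n" by (rule mod_pos_pos_trivial) (use False r assms in linarith)+
    finally show ?thesis using False by simp
  qed
  finally show ?thesis by simp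
qed

lemma inv_mod_props:
  fixes a n :: int
  assumes "coprime a n" "2 \<le> n"
  shows "inv_mod a n \<in> {1..n-1}" "[a * inv_mod a n = 1] (mod n)"
proof -
  obtain x where x: "[a * x = 1] (mod n)" using cong_solve_coprime_int[OF assms(1)] by blast
  define y where "y = x mod n"
  have y: "[a * y = 1] (mod n)" using x unfolding y_def cong_def by (simp add: mod_mult_right_eq)
  have "y \<noteq> 0" proof
    assume "y = 0" then have "(1::int) mod n = 0" using y by (simp add: cong_def)
    thus False using assms by simp
  qed
  hence yr: "y \<in> {1..n-1}" using assms unfolding y_def
    by (smt (verit) atLeastAtMost_iff pos_mod_bound pos_mod_sign)
  have "\<exists>!z. z \<in> {1..n-1} \<and> [a * z = 1] (mod n)"
  proof (rule ex1I[of _ y])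
    show "y \<in> {1..n-1} \<and> [a * y = 1] (mod n)" using yr y by blast
  next
    fix z assume z: "z \<in> {1..n-1} \<and> [a * z = 1] (mod n)"
    have "[x * (a * z) = x * (a * y)] (mod n)" using z y
      by (meson cong_mult cong_refl cong_sym cong_trans)
    hence "[(a * x) * z = (a * x) * y] (mod n)" by (simp add: ac_simps)
    hence "[1 * z = 1 * y] (mod n)" using x by (meson cong_mult cong_refl cong_sym cong_trans)
    thus "z = y" using z yr uniq_mod[of z n y] by (simp add: cong_def)
  qed
  hence "inv_mod a n \<in> {1..n-1} \<and> [a * inv_mod a n = 1] (mod n)"
    unfolding inv_mod_def by (rule theI')
  thus "inv_mod a n \<in> {1..n-1}" "[a * inv_mod a n = 1] (mod n)" by auto
qed

lemma roundtrip:
  fixes c c' n j :: int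
  assumes "(c * c') mod n = 1" "1 \<le> j" "j \<le> n"
  shows "1 + ((((j-1)*c) mod n) * c') mod n = j"
proof -
  have "((((j-1)*c) mod n) * c') mod n = ((j-1)*c*c') mod n" by (simp add: mod_mult_left_eq)
  also have "\<dots> = ((j-1)*(c*c')) mod n" by (simp add: ac_simps)
  also have "\<dots> = ((j-1)*((c*c') mod n)) mod n" by (simp add: mod_mult_right_eq)
  also have "\<dots> = j - 1" using assms by simp
  finally show ?thesis by simp
qed

theorem corollary2p6:
  fixes a b :: int
  assumes "coprime a b" and "0 < a" and "a < b"
  shows "D_pair (inv_mod a (a + b)) (-((a + b) - inv_mod a (a + b)))
           (inv_into {1..a + b} (pi_perm a b)) (a + b)"
proof -
  define n where "n = a + b"
  define a' where "a' = inv_mod a n"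
  have n3: "n \<ge> 3" using assms unfolding n_def by linarith
  have mb: "x mod n < n" "0 \<le> x mod n" for x using n3 by auto
  have cop: "coprime a n" using assms(1) unfolding n_def
    by (simp add: coprime_iff_gcd_eq_1)
  have a'r: "a' \<in> {1..n-1}" and a'c: "[a * a' = 1] (mod n)"
    using inv_mod_props[OF cop] n3 unfolding a'_def by auto
  have aa': "(a * a') mod n = 1" "(a' * a) mod n = 1" using a'c n3 by (auto simp: cong_def ac_simps)
  define \<sigma> where "\<sigma> = inv_into {1..n} (pi_perm a b)"
  show ?thesis
  proof (cases "a = 1")
    case True
    have a'1: "a' = 1" using a'r a'c True uniq_mod[of a' n 1] n3 by (simp add: cong_def)
    have pi: "pi_perm a b i = (if i \<le> b then i + 1 else 1)" for i
      using True unfolding pi_perm_def by simp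
    have inj: "inj_on (pi_perm a b) {1..n}"
      unfolding inj_on_def pi n_def using True by auto
    have sig: "\<sigma> j = (if j = 1 then n else j - 1)" if "j \<in> {1..n}" for j
      unfolding \<sigma>_def
      by (rule inv_into_f_eq[OF inj]) (use that True n3 in \<open>auto simp: pi_perm_def n_def\<close>)
    have "{\<sigma> (i + 1) - \<sigma> i | i. 1 \<le> i \<and> i \<le> n - 1} = {1, -(n - 1)}"
    proof (intro equalityI subsetI)
      fix x assume "x \<in> {\<sigma> (i + 1) - \<sigma> i | i. 1 \<le> i \<and> i \<le> n - 1}"
      then obtain i where "1 \<le> i" "i \<le> n - 1" "x = \<sigma> (i + 1) - \<sigma> i" by blast
      thus "x \<in> {1, -(n - 1)}" using sig[of i] sig[of "i+1"] by (auto split: if_splits)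
    next
      fix x assume "x \<in> {1, -(n - 1)}"
      moreover have "\<sigma> (2 + 1) - \<sigma> 2 = 1" using sig[of 2] sig[of 3] n3 by auto
      moreover have "\<sigma> (1 + 1) - \<sigma> 1 = -(n - 1)" using sig[of 1] sig[of 2] n3 by auto
      ultimately show "x \<in> {\<sigma> (i + 1) - \<sigma> i | i. 1 \<le> i \<and> i \<le> n - 1}"
        using n3 by (smt (verit) insertE mem_Collect_eq singletonD)
    qed
    thus ?thesis unfolding D_pair_def using a'1 n3
      by (simp add: a'_def n_def \<sigma>_def)
  next
    case False
    define f where "f j = 1 + ((j-1)*a') mod n" for j
    have pi: "pi_perm a b i = 1 + ((i-1)*a) mod n" if "i \<in> {1..n}" for i
    proof -
      have "(THE x. x \<in> {1..a+b} \<and> [x = 1 + (i - 1) * a] (mod (a + b))) = 1 + ((i-1)*a) mod n"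
      proof (rule the_equality)
        show "1 + (i - 1) * a mod n \<in> {1..a + b} \<and> [1 + (i - 1) * a mod n = 1 + (i - 1) * a] (mod a + b)"
        proof
          show "1 + (i - 1) * a mod n \<in> {1..a + b}" using mb[of "(i - 1) * a"] unfolding n_def by simp
          show "[1 + (i - 1) * a mod n = 1 + (i - 1) * a] (mod a + b)"
            unfolding n_def by (auto simp: cong_def mod_add_right_eq)
        qed
      next
        fix x assume x: "x \<in> {1..a + b} \<and> [x = 1 + (i - 1) * a] (mod a + b)"
        have "[1 + (i - 1) * a mod n = 1 + (i - 1) * a] (mod n)"
          by (auto simp: cong_def mod_add_right_eq)
        hence "x mod n = (1 + (i - 1) * a mod n) mod n" using x unfolding n_def cong_def by simp
        moreover have "1 + (i - 1) * a mod n \<in> {1..n}" using mb[of "(i - 1) * a"] by auto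
        ultimately show "x = 1 + (i - 1) * a mod n" using x uniq_mod[of x n] unfolding n_def by auto
      qed
      thus ?thesis using False unfolding pi_perm_def by simp
    qed
    have fr: "f j \<in> {1..n}" for j using mb[of "(j-1)*a'"] unfolding f_def by auto
    have inj: "inj_on (pi_perm a b) {1..n}"
    proof (rule inj_on_inverseI)
      fix i assume "i \<in> {1..n}"
      thus "f (pi_perm a b i) = i" unfolding f_def using pi roundtrip[OF aa'(1)] by auto
    qed
    have sig: "\<sigma> j = f j" if "j \<in> {1..n}" for j
      unfolding \<sigma>_def
    proof (rule inv_into_f_eq[OF inj fr])
      show "pi_perm a b (f j) = j" using pi[OF fr] roundtrip[OF aa'(2)] that unfolding f_def by auto
    qed
    have d: "\<sigma> (i+1) - \<sigma> i = (if ((i-1)*a') mod n + a' < n then a' else a' - n)"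
      if "1 \<le> i" "i \<le> n - 1" for i
    proof -
      have "\<sigma> (i+1) - \<sigma> i = ((i-1)*a' + a') mod n - ((i-1)*a') mod n"
        using sig[of i] sig[of "i+1"] that unfolding f_def by (simp add: algebra_simps)
      thus ?thesis using step_mod[of a' n "(i-1)*a'"] a'r by auto
    qed
    have "{\<sigma> (i + 1) - \<sigma> i | i. 1 \<le> i \<and> i \<le> n - 1} = {a', -(n - a')}"
    proof (intro equalityI subsetI)
      fix x assume "x \<in> {\<sigma> (i + 1) - \<sigma> i | i. 1 \<le> i \<and> i \<le> n - 1}"
      then obtain i where "1 \<le> i" "i \<le> n - 1" "x = \<sigma> (i + 1) - \<sigma> i" by blast
      thus "x \<in> {a', -(n - a')}" using d[of i] by (auto split: if_splits)
    next
      have w1: "\<sigma> (1 + 1) - \<sigma> 1 = a'" using d[of 1] n3 a'r by auto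
      have "(b * a') mod n = (- (a * a')) mod n"
      proof -
        have "b * a' = (- (a * a')) + a' * n" unfolding n_def by (simp add: algebra_simps)
        thus ?thesis by (metis mod_mult_self1)
      qed
      also have "\<dots> = n - 1" using aa'(1) n3 by (simp add: zmod_zminus1_eq_if)
      finally have bm: "(b * a') mod n = n - 1" .
      have w2: "\<sigma> ((b+1) + 1) - \<sigma> (b+1) = -(n - a')"
        using d[of "b+1"] bm assms False a'r unfolding n_def by auto
      fix x assume "x \<in> {a', -(n - a')}"
      moreover have "1 \<le> b + 1 \<and> b + 1 \<le> n - 1" using assms False unfolding n_def by auto
      ultimately show "x \<in> {\<sigma> (i + 1) - \<sigma> i | i. 1 \<le> i \<and> i \<le> n - 1}"
        using w1 w2 n3 by (smt (verit) insertE mem_Collect_eq singletonD)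
    qed
    moreover have "a' \<noteq> -(n - a')" using a'r by auto
    ultimately show ?thesis unfolding D_pair_def
      by (simp add: a'_def n_def \<sigma>_def)
  qed
qed

end
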